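(* For all $n\ge3$, $f_\infty(W_n)\le4$, where $W_n$ is the wheel obtained from a cycle of length $n$ by adding a vertex adjacent to all vertices of the cycle.
   Context: A distance function on a graph $G$ is $d:E(G)\to\mathbb{R}_{\ge0}$ with $d(vw)\le\sum_i d(v_{i-1}v_i)$ for every edge $vw$ and every $v$–$w$ path. $f_\infty(G)$ is the least $k$ such that for every distance function $d$ on $G$ there is $\phi:V(G)\to\mathbb{R}^k$ with $\|\phi(v)-\phi(w)\|_\infty=d(vw)$ for all edges $vw$. *)

theory Defs
  imports Complex_Main
begin

definition is_path :: "'a set \<Rightarrow> 'a set set \<Rightarrow> 'a \<Rightarrow> 'a \<Rightarrow> 'a list \<Rightarrow> bool" where
  "is_path V E v w ps \<longleftrightarrow> ps \<noteq> [] \<and> hd ps = v \<and> last ps = w \<and> distinct ps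
     \<and> set ps \<subseteq> V \<and> (\<forall>(a,b)\<in>set (zip ps (tl ps)). {a,b} \<in> E)"

definition path_length :: "('a set \<Rightarrow> real) \<Rightarrow> 'a list \<Rightarrow> real" where
  "path_length d ps = sum_list (map (\<lambda>(a,b). d {a,b}) (zip ps (tl ps)))"

definition distance_function :: "'a set \<Rightarrow> 'a set set \<Rightarrow> ('a set \<Rightarrow> real) \<Rightarrow> bool" where
  "distance_function V E d \<longleftrightarrow> (\<forall>e\<in>E. d e \<ge> 0) \<and>
     (\<forall>v w ps. {v,w} \<in> E \<longrightarrow> is_path V E v w ps \<longrightarrow> d {v,w} \<le> path_length d ps)"

text \<open>Sup-norm distance in R^k, points of R^k represented as nat => real (coordinates < k).\<close>
definition linf_dist :: "nat \<Rightarrow> (nat \<Rightarrow> real) \<Rightarrow> (nat \<Rightarrow> real) \<Rightarrow> real" where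
  "linf_dist k x y = Max (insert 0 {\<bar>x i - y i\<bar> | i. i < k})"

definition linf_realizable :: "'a set \<Rightarrow> 'a set set \<Rightarrow> nat \<Rightarrow> bool" where
  "linf_realizable V E k \<longleftrightarrow> (\<forall>d. distance_function V E d \<longrightarrow>
     (\<exists>\<phi> :: 'a \<Rightarrow> nat \<Rightarrow> real. \<forall>v w. {v,w} \<in> E \<longrightarrow> linf_dist k (\<phi> v) (\<phi> w) = d {v,w}))"

definition f_infty :: "'a set \<Rightarrow> 'a set set \<Rightarrow> nat" where
  "f_infty V E = (LEAST k. linf_realizable V E k)"

text \<open>Wheel W_n: cycle on 0..n-1, hub n.\<close>
definition wheel_V :: "nat \<Rightarrow> nat set" where
  "wheel_V n = {0..n}"

definition wheel_E :: "nat \<Rightarrow> nat set set" where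
  "wheel_E n = {{i, (i + 1) mod n} | i. i < n} \<union> {{i, n} | i. i < n}"

end

theory Submission
  imports Defs
begin


definition sg :: "real \<Rightarrow> real" where "sg x = (if 0 \<le> x then 1 else -1)"

lemma sg_abs: "0 \<le> R \<Longrightarrow> \<bar>sg x * R\<bar> = R"
  by (simp add: sg_def)

lemma sg_self: "sg x * \<bar>x\<bar> = x"
  by (simp add: sg_def)

fun walk :: "(nat \<Rightarrow> real) \<Rightarrow> (nat \<Rightarrow> real) \<Rightarrow> nat \<Rightarrow> real \<times> real \<times> bool" where
  "walk R c 0 = (R 0, 0, False)"
| "walk R c (Suc k) = (case walk R c k of (f, g, sw) \<Rightarrow>
     if c k \<le> R (Suc k) then (sg f * R (Suc k), g - sg g * c k, sw)
     else (sg g * R (Suc k), f - sg f * c k, \<not> sw))"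

definition wA :: "(nat \<Rightarrow> real) \<Rightarrow> (nat \<Rightarrow> real) \<Rightarrow> nat \<Rightarrow> real" where
  "wA R c k = (case walk R c k of (f, g, sw) \<Rightarrow> if sw then g else f)"
definition wB :: "(nat \<Rightarrow> real) \<Rightarrow> (nat \<Rightarrow> real) \<Rightarrow> nat \<Rightarrow> real" where
  "wB R c k = (case walk R c k of (f, g, sw) \<Rightarrow> if sw then f else g)"

lemma move_bound: "\<bar>g\<bar> \<le> a \<Longrightarrow> a \<le> b + c \<Longrightarrow> c \<le> b \<Longrightarrow> 0 \<le> c \<Longrightarrow> \<bar>g - sg g * c\<bar> \<le> b"
  by (auto simp: sg_def abs_if)

lemma flip_bound: "\<bar>f\<bar> = a \<Longrightarrow> c \<le> a + b \<Longrightarrow> a \<le> b + c \<Longrightarrow> \<bar>f - sg f * c\<bar> \<le> b"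
  by (auto simp: sg_def abs_if)

lemma fresh_move: "\<bar>f\<bar> = a \<Longrightarrow> 0 \<le> b \<Longrightarrow> \<bar>a - b\<bar> \<le> c \<Longrightarrow> \<bar>sg f * b - f\<bar> \<le> c"
  by (cases "0 \<le> f") (auto simp: sg_def abs_le_iff)

lemma reset_move: "\<bar>g\<bar> \<le> a \<Longrightarrow> 0 \<le> b \<Longrightarrow> b < c \<Longrightarrow> a - b \<le> c \<Longrightarrow> \<bar>sg g * b - g\<bar> \<le> c"
  by (auto simp: sg_def abs_if)

lemma tight_move: "0 \<le> c \<Longrightarrow> \<bar>x - sg x * c - x\<bar> = c"
  by (auto simp: sg_def)

lemma walk_inv:
  assumes H: "\<And>k. k < m \<Longrightarrow> \<bar>R k - R (Suc k)\<bar> \<le> c k \<and> c k \<le> R k + R (Suc k)"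
    and P: "\<And>k. k \<le> m \<Longrightarrow> 0 \<le> R k"
  shows "k \<le> m \<Longrightarrow> \<bar>fst (walk R c k)\<bar> = R k \<and> \<bar>fst (snd (walk R c k))\<bar> \<le> R k"
proof (induction k)
  case 0
  then show ?case using P[of 0] by simp
next
  case (Suc k)
  obtain f g sw where w: "walk R c k = (f, g, sw)" by (metis prod_cases3)
  from Suc have IH: "\<bar>f\<bar> = R k" "\<bar>g\<bar> \<le> R k" using w by auto
  have Hk: "\<bar>R k - R (Suc k)\<bar> \<le> c k" "c k \<le> R k + R (Suc k)" using H[of k] Suc by auto
  have PS: "0 \<le> R (Suc k)" using P Suc by auto
  have c0: "0 \<le> c k" using Hk by linarith
  show ?case
  proof (cases "c k \<le> R (Suc k)")
    case True
    then show ?thesis using w IH Hk PS c0 sg_abs[OF PS] move_bound[of g "R k" "R (Suc k)" "c k"] by auto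
  next
    case False
    then show ?thesis using w IH Hk PS c0 sg_abs[OF PS] flip_bound[of f "R k" "c k" "R (Suc k)"] by auto
  qed
qed

lemma walk_step:
  assumes H: "\<And>k. k < m \<Longrightarrow> \<bar>R k - R (Suc k)\<bar> \<le> c k \<and> c k \<le> R k + R (Suc k)"
    and P: "\<And>k. k \<le> m \<Longrightarrow> 0 \<le> R k"
    and k: "k < m"
  shows "\<bar>wA R c k - wA R c (Suc k)\<bar> \<le> c k \<and> \<bar>wB R c k - wB R c (Suc k)\<bar> \<le> c k \<and>
         (\<bar>wA R c k - wA R c (Suc k)\<bar> = c k \<or> \<bar>wB R c k - wB R c (Suc k)\<bar> = c k)"
proof -
  obtain f g sw where w: "walk R c k = (f, g, sw)" by (metis prod_cases3)
  have IH: "\<bar>f\<bar> = R k" "\<bar>g\<bar> \<le> R k" using walk_inv[where m=m and R=R and c=c, OF H P, of k] k w by auto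
  have Hk: "\<bar>R k - R (Suc k)\<bar> \<le> c k" "c k \<le> R k + R (Suc k)" using H[of k] k by auto
  have PS: "0 \<le> R (Suc k)" using P k by auto
  have c0: "0 \<le> c k" using Hk by linarith
  show ?thesis
  proof (cases "c k \<le> R (Suc k)")
    case True
    have a: "\<bar>sg f * R (Suc k) - f\<bar> \<le> c k" using fresh_move[OF IH(1) PS Hk(1)] .
    have b: "\<bar>g - (g - sg g * c k)\<bar> = c k" using c0 by (simp add: sg_def)
    show ?thesis using True w a b by (auto simp: wA_def wB_def abs_minus_commute)
  next
    case False
    have a: "\<bar>sg g * R (Suc k) - g\<bar> \<le> c k"
      using reset_move[OF IH(2) PS] False Hk by (simp add: abs_le_iff)
    have b: "\<bar>f - (f - sg f * c k)\<bar> = c k" using c0 by (simp add: sg_def)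
    show ?thesis using False w a b by (auto simp: wA_def wB_def abs_minus_commute)
  qed
qed

lemma walk_bound:
  assumes H: "\<And>k. k < m \<Longrightarrow> \<bar>R k - R (Suc k)\<bar> \<le> c k \<and> c k \<le> R k + R (Suc k)"
    and P: "\<And>k. k \<le> m \<Longrightarrow> 0 \<le> R k"
    and k: "k \<le> m"
  shows "\<bar>wA R c k\<bar> \<le> R k \<and> \<bar>wB R c k\<bar> \<le> R k"
  using walk_inv[where m=m and R=R and c=c, OF H P k] by (auto simp: wA_def wB_def split: prod.splits)

definition clamp :: "real \<Rightarrow> real \<Rightarrow> real" where "clamp a x = max (-a) (min a x)"

lemma clamp_abs: "0 \<le> a \<Longrightarrow> \<bar>clamp a x\<bar> \<le> a"
  by (auto simp: clamp_def)

lemma clamp_id: "\<bar>x\<bar> \<le> a \<Longrightarrow> clamp a x = x"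
  by (auto simp: clamp_def)

lemma clamp_lip: "\<bar>a - b\<bar> \<le> e \<Longrightarrow> \<bar>x - y\<bar> \<le> e \<Longrightarrow> \<bar>clamp a x - clamp b y\<bar> \<le> e"
  by (auto simp: clamp_def max_def min_def abs_le_iff)

lemma linf_dist_eq:
  assumes "\<And>i. i < k \<Longrightarrow> \<bar>x i - y i\<bar> \<le> D" "i0 < k" "\<bar>x i0 - y i0\<bar> = D"
  shows "linf_dist k x y = D"
proof -
  have eq: "{\<bar>x i - y i\<bar> | i. i < k} = (\<lambda>i. \<bar>x i - y i\<bar>) ` {..<k}" by auto
  show ?thesis unfolding linf_dist_def eq
    by (rule Max_eqI) (use assms in auto)
qed

lemma linf_dist_sym: "linf_dist k x y = linf_dist k y x"
  unfolding linf_dist_def by (simp add: abs_minus_commute)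



lemma core:
  fixes n :: nat and r c :: "nat \<Rightarrow> real"
  assumes n2: "2 \<le> n"
    and rnn: "\<And>i. i < n \<Longrightarrow> 0 \<le> r i"
    and C1: "\<And>i. i < n \<Longrightarrow> c i \<le> r i + r (Suc i mod n)"
    and S1: "\<And>i. i < n \<Longrightarrow> \<bar>r i - r (Suc i mod n)\<bar> \<le> c i"
    and C2: "\<And>i. i < n \<Longrightarrow> 2 * c i \<le> (\<Sum>j<n. c j)"
    and tm: "\<And>i. i < n \<Longrightarrow> r (n-1) + r 0 - c (n-1) \<le> r i + r (Suc i mod n) - c i"
  shows "\<exists>A B C. \<forall>i<n. \<bar>A i\<bar> \<le> r i \<and> \<bar>B i\<bar> \<le> r i \<and> \<bar>C i\<bar> \<le> r i \<and>
     \<bar>A i - A (Suc i mod n)\<bar> \<le> c i \<and> \<bar>B i - B (Suc i mod n)\<bar> \<le> c i \<and> \<bar>C i - C (Suc i mod n)\<bar> \<le> c i \<and>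
     (\<bar>A i - A (Suc i mod n)\<bar> = c i \<or> \<bar>B i - B (Suc i mod n)\<bar> = c i \<or> \<bar>C i - C (Suc i mod n)\<bar> = c i)"
proof -
  define m where "m = n - 1"
  have nm: "n = Suc m" using n2 unfolding m_def by simp
  have m1: "1 \<le> m" using n2 unfolding m_def by simp
  have sucmod: "\<And>i. i < m \<Longrightarrow> Suc i mod n = Suc i" using nm by simp
  have sucmodm: "Suc m mod n = 0" using nm by simp
  have C1p: "\<And>k. k < m \<Longrightarrow> c k \<le> r k + r (Suc k)"
  proof - fix k assume "k < m" then show "c k \<le> r k + r (Suc k)" using C1[of k] sucmod[of k] nm by simp qed
  have S1p: "\<And>k. k < m \<Longrightarrow> \<bar>r k - r (Suc k)\<bar> \<le> c k"
  proof - fix k assume "k < m" then show "\<bar>r k - r (Suc k)\<bar> \<le> c k" using S1[of k] sucmod[of k] nm by simp qed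
  have C1c: "c m \<le> r m + r 0" using C1[of m] nm by simp
  have S1c: "\<bar>r m - r 0\<bar> \<le> c m" using S1[of m] nm by simp
  have tmp: "\<And>k. k < m \<Longrightarrow> r m + r 0 - c m \<le> r k + r (Suc k) - c k"
  proof - fix k assume "k < m" then show "r m + r 0 - c m \<le> r k + r (Suc k) - c k"
     using tm[of k] sucmod[of k] nm unfolding m_def by simp qed
  have cnn: "\<And>i. i < n \<Longrightarrow> 0 \<le> c i" using S1 by (meson abs_ge_zero order_trans)
  have rnn': "\<And>i. i \<le> m \<Longrightarrow> 0 \<le> r i" using rnn nm by simp
  define cc where "cc = c m"
  define al where "al k = (\<Sum>i<k. c i)" for k
  define be where "be k = (\<Sum>i\<in>{k..<m}. c i)" for k
  define L where "L = (\<Sum>j<n. c j)"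
  have L: "L = al m + cc" unfolding L_def al_def cc_def nm by simp
  have C2p: "\<And>k. k < m \<Longrightarrow> 2 * c k \<le> L" using C2 nm L_def by simp
  have C2c: "2 * cc \<le> L" using C2[of m] nm L_def cc_def by simp
  have alS: "\<And>k. al (Suc k) = al k + c k" unfolding al_def by simp
  have beS: "\<And>k. k < m \<Longrightarrow> be k = c k + be (Suc k)" unfolding be_def by (simp add: sum.atLeast_Suc_lessThan)
  have bem: "be m = 0" unfolding be_def by simp
  have al0: "al 0 = 0" unfolding al_def by simp
  have alnn: "\<And>k. k \<le> m \<Longrightarrow> 0 \<le> al k" unfolding al_def using cnn nm by (intro sum_nonneg) auto
  have benn: "\<And>k. 0 \<le> be k" unfolding be_def using cnn nm by (intro sum_nonneg) auto
  have albe: "\<And>k. k \<le> m \<Longrightarrow> al k + be k = al m"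
    unfolding al_def be_def by (metis atLeast0LessThan sum.atLeastLessThan_concat zero_le)
  have chainA: "\<And>k. k \<le> m \<Longrightarrow> r k \<le> al k + r 0"
  proof -
    fix k show "k \<le> m \<Longrightarrow> r k \<le> al k + r 0"
    proof (induction k)
      case 0 then show ?case by (simp add: al0)
    next
      case (Suc k)
      then have "r (Suc k) \<le> r k + c k" using S1p[of k] by (simp add: abs_le_iff)
      then show ?case using Suc alS[of k] by simp
    qed
  qed
  have chainB: "\<And>d. d \<le> m \<Longrightarrow> r (m - d) \<le> be (m - d) + r m"
  proof -
    fix d show "d \<le> m \<Longrightarrow> r (m - d) \<le> be (m - d) + r m"
    proof (induction d)
      case 0 then show ?case by (simp add: bem)
    next
      case (Suc d)
      define k where "k = m - Suc d"
      have k: "k < m" "Suc k = m - d" using Suc.prems unfolding k_def by auto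
      have "r k \<le> r (Suc k) + c k" using S1p[OF k(1)] by (simp add: abs_le_iff)
      then show ?case using Suc k beS[OF k(1)] unfolding k_def[symmetric] by simp
    qed
  qed
  have chainB': "\<And>k. k \<le> m \<Longrightarrow> r k \<le> be k + r m"
    using chainB by (metis diff_diff_cancel diff_le_self)
  define s where "s = max 0 (cc - r m)"
  have s0: "0 \<le> s" "s \<le> cc" using rnn'[of m] cnn[of m] nm unfolding s_def cc_def by auto
  have sA: "\<And>k. k < m \<Longrightarrow> c k - al k - r (Suc k) \<le> s"
  proof -
    fix k assume k: "k < m"
    have "r k \<le> al k + r 0" using chainA k by simp
    then show "c k - al k - r (Suc k) \<le> s" using tmp[OF k] unfolding s_def cc_def by linarith
  qed
  have sB: "\<And>k. k < m \<Longrightarrow> c k - r k - be (Suc k) \<le> cc - s"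
  proof -
    fix k assume k: "k < m"
    have "r (Suc k) \<le> be (Suc k) + r m" using chainB' k by simp
    then show "c k - r k - be (Suc k) \<le> cc - s"
      using tmp[OF k] C1c rnn'[of 0] unfolding s_def cc_def by auto
  qed
  define R where "R k = min (r k) (min (s + al k) (cc - s + be k))" for k
  have Rnn: "\<And>k. k \<le> m \<Longrightarrow> 0 \<le> R k"
    unfolding R_def using rnn' alnn benn s0 by auto
  have Rle: "\<And>k. R k \<le> r k" unfolding R_def by simp
  have H: "\<And>k. k < m \<Longrightarrow> \<bar>R k - R (Suc k)\<bar> \<le> c k \<and> c k \<le> R k + R (Suc k)"
  proof -
    fix k assume k: "k < m"
    have f1: "c k \<le> r k + r (Suc k)" "\<bar>r k - r (Suc k)\<bar> \<le> c k" using C1p S1p k by auto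
    have f2: "al (Suc k) = al k + c k" "be k = c k + be (Suc k)" using alS beS k by auto
    have f3: "al k + c k + be (Suc k) = al m" using albe[of k] f2 k by simp
    have f4: "2 * c k \<le> al m + cc" using C2p k L by simp
    have f5: "0 \<le> al k" "0 \<le> be (Suc k)" "0 \<le> c k" "0 \<le> r k" "0 \<le> r (Suc k)"
      using alnn benn cnn rnn' k nm by auto
    have f6: "c k - al k - r (Suc k) \<le> s" "c k - r k - be (Suc k) \<le> cc - s" using sA sB k by auto
    show "\<bar>R k - R (Suc k)\<bar> \<le> c k \<and> c k \<le> R k + R (Suc k)"
      unfolding R_def using f1 f2 f3 f4 f5 f6 s0
      by (simp add: min_def abs_le_iff)
  qed
  define A where "A = wA R c"
  define B where "B = wB R c"
  define C where "C i = clamp (r i) (max (r 0 - al i) (r 0 - cc))" for i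
  show ?thesis
  proof (intro exI allI impI)
    fix i assume i: "i < n"
    show "\<bar>A i\<bar> \<le> r i \<and> \<bar>B i\<bar> \<le> r i \<and> \<bar>C i\<bar> \<le> r i \<and>
     \<bar>A i - A (Suc i mod n)\<bar> \<le> c i \<and> \<bar>B i - B (Suc i mod n)\<bar> \<le> c i \<and> \<bar>C i - C (Suc i mod n)\<bar> \<le> c i \<and>
     (\<bar>A i - A (Suc i mod n)\<bar> = c i \<or> \<bar>B i - B (Suc i mod n)\<bar> = c i \<or> \<bar>C i - C (Suc i mod n)\<bar> = c i)"
    proof -
      have im: "i \<le> m" using i nm by simp
      have bA: "\<And>k. k \<le> m \<Longrightarrow> \<bar>A k\<bar> \<le> R k \<and> \<bar>B k\<bar> \<le> R k"
        unfolding A_def B_def using walk_bound[where m=m and R=R and c=c, OF H Rnn] by blast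
      have b1: "\<bar>A i\<bar> \<le> r i" "\<bar>B i\<bar> \<le> r i" "\<bar>C i\<bar> \<le> r i"
        using bA[OF im] Rle[of i] clamp_abs[OF rnn'[OF im]] unfolding C_def by auto
      show ?thesis
      proof (cases "i < m")
        case True
        have st: "\<bar>A i - A (Suc i)\<bar> \<le> c i \<and> \<bar>B i - B (Suc i)\<bar> \<le> c i \<and>
           (\<bar>A i - A (Suc i)\<bar> = c i \<or> \<bar>B i - B (Suc i)\<bar> = c i)"
          unfolding A_def B_def using walk_step[where m=m and R=R and c=c, OF H Rnn True] .
        have "\<bar>max (r 0 - al i) (r 0 - cc) - max (r 0 - al (Suc i)) (r 0 - cc)\<bar> \<le> c i"
          using alS[of i] cnn[of i] i by (simp add: max_def abs_le_iff)
        then have cl: "\<bar>C i - C (Suc i)\<bar> \<le> c i"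
          unfolding C_def using clamp_lip S1p[OF True] by blast
        show ?thesis using b1 st cl sucmod[OF True] by auto
      next
        case False
        then have im': "i = m" using im by simp
        have A0: "\<bar>A 0\<bar> \<le> s" "\<bar>B 0\<bar> \<le> s" using bA[of 0] unfolding R_def by (auto simp: al0)
        have Am: "\<bar>A m\<bar> \<le> cc - s" "\<bar>B m\<bar> \<le> cc - s" using bA[of m] unfolding R_def by (auto simp: bem)
        have ab: "\<bar>A m - A 0\<bar> \<le> cc" "\<bar>B m - B 0\<bar> \<le> cc" using A0 Am by (auto simp: abs_le_iff)
        have C0: "C 0 = r 0" unfolding C_def al0 using cnn[of m] nm rnn[of 0] cc_def
          by (simp add: clamp_id max_def)
        have alm: "cc \<le> al m" using C2c L by simp
        have Cm: "C m = r 0 - cc" unfolding C_def using alm C1c S1c cc_def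
          by (auto simp add: clamp_id max_def abs_le_iff)
        have cm: "\<bar>C m - C 0\<bar> = cc" using C0 Cm cnn[of m] nm cc_def by simp
        show ?thesis using b1 ab cm im' sucmodm unfolding cc_def by simp
      qed
    qed
  qed
qed


lemma mod_inj_aux: "x mod n = y mod n \<Longrightarrow> y \<le> x \<Longrightarrow> x - y < (n::nat) \<Longrightarrow> x = y"
proof -
  assume h: "x mod n = y mod n" "y \<le> x" "x - y < n"
  then have "n dvd x - y" using mod_eq_dvd_iff_nat by blast
  then have "x - y = 0" using h(3) by (metis dvd_imp_le not_less zero_less_iff_neq_zero)
  then show ?thesis using h(2) by simp
qed
lemma inj1: "a < n \<Longrightarrow> b < n \<Longrightarrow> (a + k) mod n = (b + k) mod n \<Longrightarrow> a = (b::nat)"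
proof -
  assume h: "a < n" "b < n" "(a + k) mod n = (b + k) mod n"
  show "a = b"
  proof (cases "b \<le> a")
    case True then show ?thesis using mod_inj_aux[of "a+k" n "b+k"] h by simp
  next
    case False
    have "b - a < n" using h by (simp add: less_imp_diff_less)
    then show ?thesis using False mod_inj_aux[of "b+k" n "a+k"] h by simp
  qed
qed
lemma inj2: "a < n \<Longrightarrow> b < n \<Longrightarrow> (i + n - a) mod n = (i + n - b) mod n \<Longrightarrow> a = (b::nat)"
proof -
  assume h: "a < n" "b < n" "(i + n - a) mod n = (i + n - b) mod n"
  show "a = b"
  proof (cases "b \<le> a")
    case True
    have "i + n - a \<le> i + n - b" "(i + n - b) - (i + n - a) < n" using True h by auto
    then have "i + n - b = i + n - a" using mod_inj_aux[of "i+n-b" n "i+n-a"] h by simp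
    then show ?thesis using h by simp
  next
    case False
    have "i + n - b \<le> i + n - a" "(i + n - a) - (i + n - b) < n" using False h by auto
    then have "i + n - b = i + n - a" using mod_inj_aux[of "i+n-a" n "i+n-b"] h by simp
    then show ?thesis using h by simp
  qed
qed
lemma rot_sum: "0 < n \<Longrightarrow> (\<Sum>j<n. f ((j + k) mod n)) = (\<Sum>j<(n::nat). f j)"
proof -
  assume n: "0 < n"
  have "bij_betw (\<lambda>j. (j + k) mod n) {..<n} {..<n}"
  proof -
    have i: "inj_on (\<lambda>j. (j + k) mod n) {..<n}" using inj1 unfolding inj_on_def by blast
    have "(\<lambda>j. (j + k) mod n) ` {..<n} = {..<n}"
      by (rule endo_inj_surj) (use i n in auto)
    then show ?thesis using i by (simp add: bij_betw_def)
  qed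
  then show ?thesis by (rule sum.reindex_bij_betw)
qed
lemma refl_bij: "0 < n \<Longrightarrow> bij_betw (\<lambda>t. (i + n - t) mod n) {..<n} {..<(n::nat)}"
proof -
  assume n: "0 < n"
  have i: "inj_on (\<lambda>t. (i + n - t) mod n) {..<n}" using inj2 unfolding inj_on_def by blast
  have "(\<lambda>t. (i + n - t) mod n) ` {..<n} = {..<n}"
    by (rule endo_inj_surj) (use i n in auto)
  then show ?thesis using i by (simp add: bij_betw_def)
qed
lemma zip_map_tl: "zip (map g [0..<Suc m]) (tl (map g [0..<Suc m])) = map (\<lambda>t. (g t, g (Suc t))) [0..<m]"
  by (rule nth_equalityI) (auto simp del: upt_Suc simp: nth_tl)

lemma rotnext: "0 < n \<Longrightarrow> (Suc u mod n + k) mod n = Suc ((u + k) mod n) mod (n::nat)"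
  by (simp add: mod_Suc_eq mod_add_left_eq)

lemma cyc_edge: "i < n \<Longrightarrow> {i, Suc i mod n} \<in> wheel_E n"
  unfolding wheel_E_def by (rule UnI1) auto

lemma spoke_edge: "i < n \<Longrightarrow> {i, n} \<in> wheel_E n"
  unfolding wheel_E_def by (rule UnI2) auto

lemma suc_ne: "2 \<le> n \<Longrightarrow> i < n \<Longrightarrow> Suc i mod n \<noteq> i"
proof (cases "Suc i < n")
  case False
  assume "2 \<le> n" "i < n"
  then have "Suc i = n" using False by simp
  then show ?thesis using \<open>2 \<le> n\<close> by auto
qed simp

lemma wheel_facts:
  assumes n3: "3 \<le> n" and df: "distance_function (wheel_V n) (wheel_E n) d" and i: "i < n"
  shows "0 \<le> d {i, n}"
    "d {i, Suc i mod n} \<le> d {i, n} + d {Suc i mod n, n}"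
    "\<bar>d {i, n} - d {Suc i mod n, n}\<bar> \<le> d {i, Suc i mod n}"
    "2 * d {i, Suc i mod n} \<le> (\<Sum>j<n. d {j, Suc j mod n})"
proof -
  have nn: "\<And>e. e \<in> wheel_E n \<Longrightarrow> 0 \<le> d e" using df unfolding distance_function_def by blast
  have pth: "\<And>v w ps. {v, w} \<in> wheel_E n \<Longrightarrow> is_path (wheel_V n) (wheel_E n) v w ps \<Longrightarrow> d {v, w} \<le> path_length d ps"
    using df unfolding distance_function_def by blast
  define j where "j = Suc i mod n"
  have j: "j < n" "j \<noteq> i" using i n3 suc_ne[of n i] unfolding j_def by auto
  show "0 \<le> d {i, n}" using nn spoke_edge[OF i] by blast
  have jn: "j \<noteq> n" "i \<noteq> n" "n \<noteq> j" "n \<noteq> i" "i \<noteq> j" "j \<noteq> i" using i j by auto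
  have ijE: "{i, j} \<in> wheel_E n" "{j, i} \<in> wheel_E n" using cyc_edge[OF i] unfolding j_def by (auto simp: insert_commute)
  have inE: "{i, n} \<in> wheel_E n" "{n, i} \<in> wheel_E n" using spoke_edge[OF i] by (auto simp: insert_commute)
  have jnE: "{j, n} \<in> wheel_E n" "{n, j} \<in> wheel_E n" using spoke_edge[OF j(1)] by (auto simp: insert_commute)
  have Vs: "i \<in> wheel_V n" "j \<in> wheel_V n" "n \<in> wheel_V n" using i j unfolding wheel_V_def by auto
  have p1: "is_path (wheel_V n) (wheel_E n) i j [i, n, j]"
    unfolding is_path_def using jn inE jnE Vs by simp
  have "d {i, j} \<le> path_length d [i, n, j]" using pth[OF ijE(1) p1] .
  then show "d {i, Suc i mod n} \<le> d {i, n} + d {Suc i mod n, n}"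
    unfolding j_def[symmetric] path_length_def by (simp add: insert_commute)
  have p2: "is_path (wheel_V n) (wheel_E n) i n [i, j, n]"
    unfolding is_path_def using jn ijE jnE Vs by simp
  have p3: "is_path (wheel_V n) (wheel_E n) j n [j, i, n]"
    unfolding is_path_def using jn ijE inE Vs by simp
  have "d {i, n} \<le> path_length d [i, j, n]" using pth[OF inE(1) p2] .
  moreover have "d {j, n} \<le> path_length d [j, i, n]" using pth[OF jnE(1) p3] .
  ultimately show "\<bar>d {i, n} - d {Suc i mod n, n}\<bar> \<le> d {i, Suc i mod n}"
    unfolding j_def[symmetric] path_length_def by (simp add: insert_commute abs_le_iff)
  obtain m where nm: "n = Suc m" using n3 by (cases n) auto
  define g where "g t = (i + n - t) mod n" for t
  define ps where "ps = map g [0..<n]"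
  have g0: "g 0 = i" unfolding g_def using i by simp
  have gm: "g m = j" unfolding g_def j_def nm by (simp add: Suc_diff_le)
  have gS: "\<And>t. t < m \<Longrightarrow> g t = Suc (g (Suc t)) mod n"
  proof -
    fix t assume t: "t < m"
    have "i + n - t = Suc (i + n - Suc t)" using t nm by simp
    then show "g t = Suc (g (Suc t)) mod n" unfolding g_def by (simp add: mod_Suc_eq)
  qed
  have gl: "\<And>t. g t < n" unfolding g_def using i by simp
  have psm: "ps = map g [0..<Suc m]" by (simp only: ps_def nm)
  have zp: "zip ps (tl ps) = map (\<lambda>t. (g t, g (Suc t))) [0..<m]"
    unfolding psm by (rule zip_map_tl[of g m])
  have p4: "is_path (wheel_V n) (wheel_E n) i j ps"
  proof -
    have "inj_on g {0..<n}"
    proof (rule inj_onI)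
      fix a b assume "a \<in> {0..<n}" "b \<in> {0..<n}" "g a = g b"
      then show "a = b" using inj2[of a n b i] unfolding g_def by simp
    qed
    then have "distinct ps" unfolding ps_def by (simp add: distinct_map)
    moreover have "hd ps = i" unfolding psm using g0 by (simp del: upt_Suc add: hd_map)
    moreover have "last ps = j" unfolding psm using gm by (simp del: upt_Suc add: last_map)
    moreover have "set ps \<subseteq> wheel_V n" unfolding ps_def wheel_V_def using gl by (auto simp: less_imp_le)
    moreover have "\<forall>(a, b)\<in>set (zip ps (tl ps)). {a, b} \<in> wheel_E n"
    proof
      fix x assume "x \<in> set (zip ps (tl ps))"
      then obtain t where t: "t < m" "x = (g t, g (Suc t))" unfolding zp by auto
      have "{g t, g (Suc t)} = {g (Suc t), Suc (g (Suc t)) mod n}" using gS[OF t(1)] by auto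
      then show "case x of (a, b) \<Rightarrow> {a, b} \<in> wheel_E n" using t cyc_edge[OF gl[of "Suc t"]] by simp
    qed
    moreover have "ps \<noteq> []" unfolding psm by simp
    ultimately show ?thesis unfolding is_path_def by blast
  qed
  have pl: "path_length d ps = (\<Sum>t<m. d {g (Suc t), Suc (g (Suc t)) mod n})"
  proof -
    have "path_length d ps = (\<Sum>t<m. d {g t, g (Suc t)})"
      unfolding path_length_def zp by (simp add: sum_list_sum_nth atLeast0LessThan)
    also have "\<dots> = (\<Sum>t<m. d {g (Suc t), Suc (g (Suc t)) mod n})"
    proof (rule sum.cong)
      fix t assume "t \<in> {..<m}"
      then have "g t = Suc (g (Suc t)) mod n" using gS by simp
      then show "d {g t, g (Suc t)} = d {g (Suc t), Suc (g (Suc t)) mod n}" by (simp add: insert_commute)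
    qed simp
    finally show ?thesis .
  qed
  have tot: "(\<Sum>t<n. d {g t, Suc (g t) mod n}) = (\<Sum>j<n. d {j, Suc j mod n})"
    using sum.reindex_bij_betw[OF refl_bij[of n i], of "\<lambda>v. d {v, Suc v mod n}"] nm
    unfolding g_def by simp
  have "(\<Sum>t<n. d {g t, Suc (g t) mod n}) = d {i, Suc i mod n} + path_length d ps"
    unfolding pl nm by (subst sum.lessThan_Suc_shift) (simp add: g0)
  moreover have "d {i, j} \<le> path_length d ps" using pth[OF _ p4] cyc_edge[OF i] unfolding j_def by blast
  ultimately show "2 * d {i, Suc i mod n} \<le> (\<Sum>j<n. d {j, Suc j mod n})"
    using tot unfolding j_def by simp
qed



lemma realize:
  assumes n3: "3 \<le> n" and df: "distance_function (wheel_V n) (wheel_E n) d"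
  shows "\<exists>\<phi> :: nat \<Rightarrow> nat \<Rightarrow> real. \<forall>v w. {v, w} \<in> wheel_E n \<longrightarrow> linf_dist 4 (\<phi> v) (\<phi> w) = d {v, w}"
proof -
  define r where "r i = d {i, n}" for i
  define c where "c i = d {i, Suc i mod n}" for i
  have n0: "0 < n" using n3 by simp
  have F1: "\<And>i. i < n \<Longrightarrow> 0 \<le> r i" using wheel_facts(1)[OF n3 df] unfolding r_def .
  have F2: "\<And>i. i < n \<Longrightarrow> c i \<le> r i + r (Suc i mod n)" using wheel_facts(2)[OF n3 df] unfolding r_def c_def .
  have F3: "\<And>i. i < n \<Longrightarrow> \<bar>r i - r (Suc i mod n)\<bar> \<le> c i" using wheel_facts(3)[OF n3 df] unfolding r_def c_def .
  have F4: "\<And>i. i < n \<Longrightarrow> 2 * c i \<le> (\<Sum>j<n. c j)" using wheel_facts(4)[OF n3 df] unfolding c_def .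
  define T where "T i = r i + r (Suc i mod n) - c i" for i
  have fin: "finite (T ` {..<n})" "T ` {..<n} \<noteq> {}" using n0 by auto
  obtain e where e: "e < n" "T e = Min (T ` {..<n})" using Min_in[OF fin] by auto
  have emin: "\<And>i. i < n \<Longrightarrow> T e \<le> T i" using e(2) Min_le[OF fin(1)] by simp
  define k0 where "k0 = Suc e mod n"
  have k0: "k0 < n" unfolding k0_def using n0 by simp
  define r' where "r' u = r ((u + k0) mod n)" for u
  define c' where "c' u = c ((u + k0) mod n)" for u
  have nxt: "\<And>u. r ((Suc u mod n + k0) mod n) = r (Suc ((u + k0) mod n) mod n)"
    using rotnext[OF n0] by simp
  have h1: "\<And>i. i < n \<Longrightarrow> 0 \<le> r' i" unfolding r'_def using F1 n0 by simp
  have h2: "\<And>i. i < n \<Longrightarrow> c' i \<le> r' i + r' (Suc i mod n)"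
    unfolding r'_def c'_def nxt using F2 n0 by simp
  have h3: "\<And>i. i < n \<Longrightarrow> \<bar>r' i - r' (Suc i mod n)\<bar> \<le> c' i"
    unfolding r'_def c'_def nxt using F3 n0 by simp
  have sumc: "(\<Sum>j<n. c' j) = (\<Sum>j<n. c j)" unfolding c'_def by (rule rot_sum[OF n0])
  have h4: "\<And>i. i < n \<Longrightarrow> 2 * c' i \<le> (\<Sum>j<n. c' j)"
    unfolding sumc unfolding c'_def using F4 n0 by simp
  have eidx: "(n - 1 + k0) mod n = e"
  proof -
    have "(n - 1 + k0) mod n = (n - 1 + Suc e) mod n" unfolding k0_def by (simp add: mod_add_right_eq)
    also have "n - 1 + Suc e = e + n" using n0 by simp
    finally show ?thesis using e(1) by simp
  qed
  have k0idx: "(0 + k0) mod n = Suc e mod n" unfolding k0_def by simp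
  have h5: "\<And>i. i < n \<Longrightarrow> r' (n-1) + r' 0 - c' (n-1) \<le> r' i + r' (Suc i mod n) - c' i"
  proof -
    fix i assume i: "i < n"
    have "r' (n-1) + r' 0 - c' (n-1) = T e" unfolding r'_def c'_def T_def eidx k0idx by simp
    also have "\<dots> \<le> T ((i + k0) mod n)" using emin n0 by simp
    also have "\<dots> = r' i + r' (Suc i mod n) - c' i" unfolding T_def r'_def c'_def nxt ..
    finally show "r' (n-1) + r' 0 - c' (n-1) \<le> r' i + r' (Suc i mod n) - c' i" .
  qed
  obtain A B C where ABC: "\<And>i. i < n \<Longrightarrow> \<bar>A i\<bar> \<le> r' i \<and> \<bar>B i\<bar> \<le> r' i \<and> \<bar>C i\<bar> \<le> r' i \<and>
     \<bar>A i - A (Suc i mod n)\<bar> \<le> c' i \<and> \<bar>B i - B (Suc i mod n)\<bar> \<le> c' i \<and> \<bar>C i - C (Suc i mod n)\<bar> \<le> c' i \<and>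
     (\<bar>A i - A (Suc i mod n)\<bar> = c' i \<or> \<bar>B i - B (Suc i mod n)\<bar> = c' i \<or> \<bar>C i - C (Suc i mod n)\<bar> = c' i)"
    using core[of n r' c', OF _ h1 h2 h3 h4 h5] n3 by auto
  define rot where "rot v = (v + (n - k0)) mod n" for v
  have rot1: "\<And>v. v < n \<Longrightarrow> (rot v + k0) mod n = v"
  proof -
    fix v assume v: "v < n"
    have "(rot v + k0) mod n = (v + (n - k0) + k0) mod n" unfolding rot_def by (simp add: mod_add_left_eq)
    also have "v + (n - k0) + k0 = v + n" using k0 by simp
    finally show "(rot v + k0) mod n = v" using v by simp
  qed
  have rot2: "\<And>v. rot v < n" unfolding rot_def using n0 by simp
  have rot3: "\<And>v. rot (Suc v mod n) = Suc (rot v) mod n" unfolding rot_def using rotnext[OF n0] by simp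
  have rr: "\<And>v. v < n \<Longrightarrow> r' (rot v) = r v" unfolding r'_def using rot1 by simp
  have cr: "\<And>v. v < n \<Longrightarrow> c' (rot v) = c v" unfolding c'_def using rot1 by simp
  define \<phi> :: "nat \<Rightarrow> nat \<Rightarrow> real" where "\<phi> v = (if v < n then (\<lambda>j. if j = 0 then r v else if j = 1 then A (rot v)
      else if j = 2 then B (rot v) else C (rot v)) else (\<lambda>j. 0))" for v
  have j4: "\<And>j::nat. j < 4 \<Longrightarrow> j = 0 \<or> j = 1 \<or> j = 2 \<or> j = 3" by auto
  have cyc: "\<And>i. i < n \<Longrightarrow> linf_dist 4 (\<phi> i) (\<phi> (Suc i mod n)) = c i"
  proof -
    fix i assume i: "i < n"
    define u where "u = rot i"
    have u: "u < n" unfolding u_def by (rule rot2)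
    have su: "rot (Suc i mod n) = Suc u mod n" unfolding u_def by (rule rot3)
    have si: "Suc i mod n < n" using n0 by simp
    have P: "\<bar>A u - A (Suc u mod n)\<bar> \<le> c i \<and> \<bar>B u - B (Suc u mod n)\<bar> \<le> c i \<and> \<bar>C u - C (Suc u mod n)\<bar> \<le> c i \<and>
     (\<bar>A u - A (Suc u mod n)\<bar> = c i \<or> \<bar>B u - B (Suc u mod n)\<bar> = c i \<or> \<bar>C u - C (Suc u mod n)\<bar> = c i)"
      using ABC[OF u] cr[OF i] unfolding u_def by simp
    have phi_i: "\<phi> i = (\<lambda>j. if j = 0 then r i else if j = 1 then A u else if j = 2 then B u else C u)"
      unfolding \<phi>_def u_def using i by simp
    have phi_s: "\<phi> (Suc i mod n) = (\<lambda>j. if j = 0 then r (Suc i mod n) else if j = 1 then A (Suc u mod n)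
        else if j = 2 then B (Suc u mod n) else C (Suc u mod n))"
      unfolding \<phi>_def su using si by simp
    have bnd: "\<And>j. j < 4 \<Longrightarrow> \<bar>\<phi> i j - \<phi> (Suc i mod n) j\<bar> \<le> c i"
    proof -
      fix j :: nat assume "j < 4"
      then show "\<bar>\<phi> i j - \<phi> (Suc i mod n) j\<bar> \<le> c i"
        using j4 P F3[OF i] unfolding phi_i phi_s by fastforce
    qed
    show "linf_dist 4 (\<phi> i) (\<phi> (Suc i mod n)) = c i"
    proof (cases "\<bar>A u - A (Suc u mod n)\<bar> = c i")
      case True
      show ?thesis by (rule linf_dist_eq[of 4 _ _ _ 1]) (use bnd True in \<open>auto simp: phi_i phi_s\<close>)
    next
      case False
      show ?thesis
      proof (cases "\<bar>B u - B (Suc u mod n)\<bar> = c i")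
        case True
        show ?thesis by (rule linf_dist_eq[of 4 _ _ _ 2]) (use bnd True in \<open>auto simp: phi_i phi_s\<close>)
      next
        case False2: False
        then have "\<bar>C u - C (Suc u mod n)\<bar> = c i" using P False by auto
        then show ?thesis by (intro linf_dist_eq[of 4 _ _ _ 3]) (use bnd in \<open>auto simp: phi_i phi_s\<close>)
      qed
    qed
  qed
  have spk: "\<And>i. i < n \<Longrightarrow> linf_dist 4 (\<phi> i) (\<phi> n) = r i"
  proof -
    fix i assume i: "i < n"
    define u where "u = rot i"
    have u: "u < n" unfolding u_def by (rule rot2)
    have P: "\<bar>A u\<bar> \<le> r i \<and> \<bar>B u\<bar> \<le> r i \<and> \<bar>C u\<bar> \<le> r i" using ABC[OF u] rr[OF i] unfolding u_def by simp
    have phi_i: "\<phi> i = (\<lambda>j. if j = 0 then r i else if j = 1 then A u else if j = 2 then B u else C u)"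
      unfolding \<phi>_def u_def using i by simp
    have phi_n: "\<phi> n = (\<lambda>j. 0)" unfolding \<phi>_def by simp
    have bnd: "\<And>j. j < 4 \<Longrightarrow> \<bar>\<phi> i j - \<phi> n j\<bar> \<le> r i"
    proof -
      fix j :: nat assume "j < 4"
      then show "\<bar>\<phi> i j - \<phi> n j\<bar> \<le> r i"
        using j4 P F1[OF i] unfolding phi_i phi_n by fastforce
    qed
    show "linf_dist 4 (\<phi> i) (\<phi> n) = r i"
      by (rule linf_dist_eq[of 4 _ _ _ 0]) (use bnd F1[OF i] in \<open>auto simp: phi_i phi_n\<close>)
  qed
  show ?thesis
  proof (intro exI allI impI)
    fix v w assume "{v, w} \<in> wheel_E n"
    then consider (cy) i where "i < n" "{v, w} = {i, Suc i mod n}" | (sp) i where "i < n" "{v, w} = {i, n}"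
      unfolding wheel_E_def by auto
    then show "linf_dist 4 (\<phi> v) (\<phi> w) = d {v, w}"
    proof cases
      case cy
      then have "(v = i \<and> w = Suc i mod n) \<or> (v = Suc i mod n \<and> w = i)" by (auto simp: doubleton_eq_iff)
      then show ?thesis using cyc[OF cy(1)] cy(2) linf_dist_sym unfolding c_def by (metis insert_commute)
    next
      case sp
      then have "(v = i \<and> w = n) \<or> (v = n \<and> w = i)" by (auto simp: doubleton_eq_iff)
      then show ?thesis using spk[OF sp(1)] sp(2) linf_dist_sym unfolding r_def by (metis insert_commute)
    qed
  qed
qed

theorem mainTheorem12:
  fixes n :: nat
  assumes "n \<ge> 3"
  shows "f_infty (wheel_V n) (wheel_E n) \<le> 4"
proof -
  have "linf_realizable (wheel_V n) (wheel_E n) 4"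
    unfolding linf_realizable_def using realize[OF assms] by blast
  then show ?thesis unfolding f_infty_def by (rule Least_le)
qed


end
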